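(* Fix $N>0$, $\tilde\lambda=(\tilde\lambda_{\dot1},\tilde\lambda_{\dot2})\in\mathbb{C}^2$ and integers $k,l\ge0$. Define on $\mathbb{C}^2\setminus\{0\}$ $$\phi_{k,l}=\frac{k!\,l!}{(k+l)!}\sum_{j=0}^{\min(k,l)}\frac{(k+l-j)!}{j!\,(k-j)!\,(l-j)!}\Big(\frac{N}{\|u\|^2}\Big)^j[u\,\tilde\lambda]^k[\hat u\,\tilde\lambda]^l .$$ Then $\Delta\phi_{k,l}=0$ on $\mathbb{C}^2\setminus\{0\}$, where $\Delta$ is the Laplace–Beltrami operator of the Burns metric $g_N$; moreover $\phi_{k,l}=[u\,\tilde\lambda]^k[\hat u\,\tilde\lambda]^l\,(1+O(\|u\|^{-2}))$ as $\|u\|\to\infty$, and $\phi_{k,l}$ reduces to $[u\,\tilde\lambda]^k[\hat u\,\tilde\lambda]^l$ at $N=0$. Equivalently, with $\chi=\|u\|^2/N$, $\phi_{k,l}=\frac{k!l!}{(k+l)!}\chi^{-l}P^{(k-l,0)}_l(1+2\chi)[u\,\tilde\lambda]^k[\hat u\,\tilde\lambda]^l$ for $k\ge l$ (and symmetrically for $k<l$), $P^{(a,b)}_n$ being Jacobi polynomials.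
   Context: Fix $N>0$. On $\mathbb{C}^2\setminus\{0\}$ with coordinates $u=(u^{\dot1},u^{\dot2})$ write $\|u\|^2=|u^{\dot1}|^2+|u^{\dot2}|^2$ and $\hat u=(-\bar u^{\dot2},\bar u^{\dot1})$. The Burns metric is $g_N=2(|du^{\dot1}|^2+|du^{\dot2}|^2)+2N|u^{\dot2}du^{\dot1}-u^{\dot1}du^{\dot2}|^2/\|u\|^4$; its Laplace–Beltrami operator is explicitly $$\Delta=\frac{2}{1+N/\|u\|^2}\Big(\sum_{a}\frac{\partial^2}{\partial u^{a}\partial\bar u^{a}}+\frac{N}{\|u\|^4}\Big(\sum_a u^a\frac{\partial}{\partial u^a}\Big)\Big(\sum_b\bar u^b\frac{\partial}{\partial\bar u^b}\Big)\Big).$$ For $\tilde\lambda\in\mathbb{C}^2$, $[u\,\tilde\lambda]:=u^{\dot1}\tilde\lambda_{\dot1}+u^{\dot2}\tilde\lambda_{\dot2}$ and $[\hat u\,\tilde\lambda]:=-\bar u^{\dot2}\tilde\lambda_{\dot1}+\bar u^{\dot1}\tilde\lambda_{\dot2}$. *)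

theory Defs
  imports "HOL-Analysis.Analysis"
begin

type_synonym C2 = "complex \<times> complex"

definition nsq :: "C2 \<Rightarrow> real" where
  "nsq u = (cmod (fst u))^2 + (cmod (snd u))^2"

definition brk :: "C2 \<Rightarrow> C2 \<Rightarrow> complex" where
  "brk u lam = fst u * fst lam + snd u * snd lam"

definition hbrk :: "C2 \<Rightarrow> C2 \<Rightarrow> complex" where
  "hbrk u lam = - cnj (snd u) * fst lam + cnj (fst u) * snd lam"

definition dirD :: "(C2 \<Rightarrow> complex) \<Rightarrow> C2 \<Rightarrow> C2 \<Rightarrow> complex" where
  "dirD f v p = vector_derivative (\<lambda>t::real. f (p + t *\<^sub>R v)) (at 0)"

definition W1 :: "(C2 \<Rightarrow> complex) \<Rightarrow> C2 \<Rightarrow> complex" where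
  "W1 f p = (dirD f (1,0) p - \<i> * dirD f (\<i>,0) p) / 2"
definition W1b :: "(C2 \<Rightarrow> complex) \<Rightarrow> C2 \<Rightarrow> complex" where
  "W1b f p = (dirD f (1,0) p + \<i> * dirD f (\<i>,0) p) / 2"
definition W2 :: "(C2 \<Rightarrow> complex) \<Rightarrow> C2 \<Rightarrow> complex" where
  "W2 f p = (dirD f (0,1) p - \<i> * dirD f (0,\<i>) p) / 2"
definition W2b :: "(C2 \<Rightarrow> complex) \<Rightarrow> C2 \<Rightarrow> complex" where
  "W2b f p = (dirD f (0,1) p + \<i> * dirD f (0,\<i>) p) / 2"

definition Eul :: "(C2 \<Rightarrow> complex) \<Rightarrow> C2 \<Rightarrow> complex" where
  "Eul f p = fst p * W1 f p + snd p * W2 f p"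
definition Eulb :: "(C2 \<Rightarrow> complex) \<Rightarrow> C2 \<Rightarrow> complex" where
  "Eulb f p = cnj (fst p) * W1b f p + cnj (snd p) * W2b f p"

text \<open>Laplace--Beltrami operator of the Burns metric g_N (explicit formula).\<close>
definition burns_laplacian :: "real \<Rightarrow> (C2 \<Rightarrow> complex) \<Rightarrow> C2 \<Rightarrow> complex" where
  "burns_laplacian N f p =
     of_real (2 / (1 + N / nsq p)) *
       (W1 (W1b f) p + W2 (W2b f) p + of_real (N / (nsq p)^2) * Eul (Eulb f) p)"

definition phi :: "real \<Rightarrow> C2 \<Rightarrow> nat \<Rightarrow> nat \<Rightarrow> C2 \<Rightarrow> complex" where
  "phi N lam k l u =
     of_real (fact k * fact l / fact (k + l)) *
     (\<Sum>j = 0..min k l. of_real (fact (k + l - j) / (fact j * fact (k - j) * fact (l - j))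
          * (N / nsq u)^j) * brk u lam ^ k * hbrk u lam ^ l)"

definition jacobiP :: "nat \<Rightarrow> nat \<Rightarrow> nat \<Rightarrow> real \<Rightarrow> real" where
  "jacobiP n a b x = (\<Sum>s = 0..n. real ((n + a) choose (n - s)) * real ((n + b) choose s)
                        * ((x - 1) / 2)^s * ((x + 1) / 2)^(n - s))"

end

theory Submission
  imports Defs
begin


definition hasW :: "(C2 \<Rightarrow> complex) \<Rightarrow> complex \<Rightarrow> complex \<Rightarrow> complex \<Rightarrow> complex \<Rightarrow> C2 \<Rightarrow> bool" where
 "hasW f a1 b1 a2 b2 p \<longleftrightarrow> (f has_derivative (\<lambda>h. a1 * fst h + b1 * cnj (fst h) + a2 * snd h + b2 * cnj (snd h))) (at p)"

lemma dirD_hasW: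
  assumes "hasW f a1 b1 a2 b2 p"
  shows "dirD f v p = a1 * fst v + b1 * cnj (fst v) + a2 * snd v + b2 * cnj (snd v)"
proof -
  let ?D = "\<lambda>h. a1 * fst h + b1 * cnj (fst h) + a2 * snd h + b2 * cnj (snd h)"
  have d: "(f has_derivative ?D) (at (p + 0 *\<^sub>R v))" using assms by (simp add: hasW_def)
  have l: "((\<lambda>t::real. p + t *\<^sub>R v) has_derivative (\<lambda>t. t *\<^sub>R v)) (at 0)"
    by (auto intro!: derivative_eq_intros)
  have "((f \<circ> (\<lambda>t::real. p + t *\<^sub>R v)) has_derivative (?D \<circ> (\<lambda>t. t *\<^sub>R v))) (at 0)"
    by (rule diff_chain_at[OF l]) (use d in simp)
  moreover have "?D \<circ> (\<lambda>t. t *\<^sub>R v) = (\<lambda>t. t *\<^sub>R ?D v)"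
    by (rule ext) (simp add: scaleR_conv_of_real algebra_simps)
  ultimately have "((\<lambda>t::real. f (p + t *\<^sub>R v)) has_vector_derivative ?D v) (at 0)"
    by (simp add: has_vector_derivative_def o_def)
  then show ?thesis unfolding dirD_def by (rule vector_derivative_at)
qed

lemma hasW_W:
  assumes "hasW f a1 b1 a2 b2 p"
  shows "W1 f p = a1" "W1b f p = b1" "W2 f p = a2" "W2b f p = b2"
  using dirD_hasW[OF assms] by (simp_all add: W1_def W1b_def W2_def W2b_def algebra_simps)

lemma hasW_cong: "hasW f a1 b1 a2 b2 p \<Longrightarrow> a1 = a1' \<Longrightarrow> b1 = b1' \<Longrightarrow> a2 = a2' \<Longrightarrow> b2 = b2' \<Longrightarrow> hasW f a1' b1' a2' b2' p"
  by simp

lemma hasW_transform: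
  assumes "hasW f a1 b1 a2 b2 p" "open S" "p \<in> S" "\<And>x. x \<in> S \<Longrightarrow> f x = g x"
  shows "hasW g a1 b1 a2 b2 p"
  using assms unfolding hasW_def by (blast intro: has_derivative_transform_within_open)

lemma hasW_const: "hasW (\<lambda>x. c) 0 0 0 0 p"
  unfolding hasW_def by simp

lemma hasW_fst: "hasW fst 1 0 0 0 p"
  unfolding hasW_def by (rule has_derivative_eq_rhs[OF has_derivative_fst[OF has_derivative_ident]]) auto

lemma hasW_snd: "hasW snd 0 0 1 0 p"
  unfolding hasW_def by (rule has_derivative_eq_rhs[OF has_derivative_snd[OF has_derivative_ident]]) auto

lemma hasW_cfst: "hasW (\<lambda>x. cnj (fst x)) 0 1 0 0 p"
  unfolding hasW_def by (rule has_derivative_eq_rhs[OF has_derivative_cnj[OF has_derivative_fst[OF has_derivative_ident]]]) auto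

lemma hasW_csnd: "hasW (\<lambda>x. cnj (snd x)) 0 0 0 1 p"
  unfolding hasW_def by (rule has_derivative_eq_rhs[OF has_derivative_cnj[OF has_derivative_snd[OF has_derivative_ident]]]) auto

lemma hasW_add:
  "hasW f a1 b1 a2 b2 p \<Longrightarrow> hasW g c1 d1 c2 d2 p \<Longrightarrow> hasW (\<lambda>x. f x + g x) (a1+c1) (b1+d1) (a2+c2) (b2+d2) p"
  unfolding hasW_def by (erule (1) has_derivative_eq_rhs[OF has_derivative_add]) (auto simp: algebra_simps)

lemma hasW_mult:
  "hasW f a1 b1 a2 b2 p \<Longrightarrow> hasW g c1 d1 c2 d2 p \<Longrightarrow>
   hasW (\<lambda>x. f x * g x) (f p * c1 + g p * a1) (f p * d1 + g p * b1) (f p * c2 + g p * a2) (f p * d2 + g p * b2) p"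
  unfolding hasW_def by (erule (1) has_derivative_eq_rhs[OF has_derivative_mult]) (auto simp: algebra_simps)

lemma hasW_power:
  "hasW f a1 b1 a2 b2 p \<Longrightarrow>
   hasW (\<lambda>x. f x ^ n) (of_nat n * f p ^ (n-1) * a1) (of_nat n * f p ^ (n-1) * b1) (of_nat n * f p ^ (n-1) * a2) (of_nat n * f p ^ (n-1) * b2) p"
  unfolding hasW_def by (erule has_derivative_eq_rhs[OF has_derivative_power]) (auto simp: algebra_simps)

lemma hasW_inverse:
  assumes f: "hasW f a1 b1 a2 b2 p" and nz: "f p \<noteq> 0"
  shows "hasW (\<lambda>x. inverse (f x)) (- a1 * inverse (f p)^2) (- b1 * inverse (f p)^2) (- a2 * inverse (f p)^2) (- b2 * inverse (f p)^2) p"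
proof -
  have d: "(f has_derivative (\<lambda>h. a1 * fst h + b1 * cnj (fst h) + a2 * snd h + b2 * cnj (snd h))) (at p within UNIV)"
    using f by (simp add: hasW_def)
  show ?thesis unfolding hasW_def
    apply (rule has_derivative_eq_rhs[OF Deriv.has_derivative_inverse[OF nz d]])
    apply (rule ext) apply (simp add: algebra_simps power2_eq_square)
    done
qed

lemma hasW_sum:
  "(\<And>i. i \<in> I \<Longrightarrow> hasW (f i) (a1 i) (b1 i) (a2 i) (b2 i) p) \<Longrightarrow>
   hasW (\<lambda>x. \<Sum>i\<in>I. f i x) (\<Sum>i\<in>I. a1 i) (\<Sum>i\<in>I. b1 i) (\<Sum>i\<in>I. a2 i) (\<Sum>i\<in>I. b2 i) p"
  unfolding hasW_def
  apply (rule has_derivative_eq_rhs)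
   apply (rule has_derivative_sum, blast)
  apply (rule ext) apply (simp add: sum.distrib sum_distrib_right)
  done




definition Sq :: "C2 \<Rightarrow> complex" where "Sq p = fst p * cnj (fst p) + snd p * cnj (snd p)"
definition Qf :: "C2 \<Rightarrow> complex" where "Qf p = inverse (Sq p)"
definition U :: "C2 \<Rightarrow> nat \<Rightarrow> nat \<Rightarrow> nat \<Rightarrow> C2 \<Rightarrow> complex" where
  "U lam j m n p = Qf p ^ j * brk p lam ^ m * hbrk p lam ^ n"
definition dA1 where "dA1 lam j m n p = - of_nat j * cnj (fst p) * U lam (Suc j) m n p + of_nat m * fst lam * U lam j (m-1) n p"
definition dB1 where "dB1 lam j m n p = - of_nat j * fst p * U lam (Suc j) m n p + of_nat n * snd lam * U lam j m (n-1) p"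
definition dA2 where "dA2 lam j m n p = - of_nat j * cnj (snd p) * U lam (Suc j) m n p + of_nat m * snd lam * U lam j (m-1) n p"
definition dB2 where "dB2 lam j m n p = - of_nat j * snd p * U lam (Suc j) m n p - of_nat n * fst lam * U lam j m (n-1) p"

lemma Sq_nsq: "Sq p = of_real (nsq p)"
  by (simp add: Sq_def nsq_def complex_mult_cnj cmod_power2)

lemma nsq_pos: "p \<noteq> 0 \<Longrightarrow> nsq p > 0"
  by (cases p) (auto simp: nsq_def zero_prod_def add_pos_nonneg add_nonneg_pos)

lemma Sq_nz: "p \<noteq> 0 \<Longrightarrow> Sq p \<noteq> 0"
  using nsq_pos[of p] by (simp add: Sq_nsq)

lemma hasW_Sq: "hasW Sq (cnj (fst p)) (fst p) (cnj (snd p)) (snd p) p"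
proof -
  have "hasW (\<lambda>x. fst x * cnj (fst x) + snd x * cnj (snd x)) (fst p * 0 + cnj (fst p) * 1 + (snd p * 0 + cnj (snd p) * 0))
     (fst p * 1 + cnj (fst p) * 0 + (snd p * 0 + cnj (snd p) * 0))
     (fst p * 0 + cnj (fst p) * 0 + (snd p * 0 + cnj (snd p) * 1))
     (fst p * 0 + cnj (fst p) * 0 + (snd p * 1 + cnj (snd p) * 0)) p"
    by (rule hasW_add[OF hasW_mult[OF hasW_fst hasW_cfst] hasW_mult[OF hasW_snd hasW_csnd]])
  then show ?thesis by (simp add: Sq_def[abs_def])
qed

lemma hasW_Qf: "p \<noteq> 0 \<Longrightarrow> hasW Qf (- (Qf p ^ 2) * cnj (fst p)) (- (Qf p ^ 2) * fst p) (- (Qf p ^ 2) * cnj (snd p)) (- (Qf p ^ 2) * snd p) p"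
  using hasW_inverse[OF hasW_Sq Sq_nz, of p] by (simp add: Qf_def[abs_def] mult.commute)

lemma hasW_A: "hasW (\<lambda>x. brk x lam) (fst lam) 0 (snd lam) 0 p"
proof -
  have "hasW (\<lambda>x. fst x * fst lam + snd x * snd lam) (fst p * 0 + fst lam * 1 + (snd p * 0 + snd lam * 0))
      (fst p * 0 + fst lam * 0 + (snd p * 0 + snd lam * 0))
      (fst p * 0 + fst lam * 0 + (snd p * 0 + snd lam * 1))
      (fst p * 0 + fst lam * 0 + (snd p * 0 + snd lam * 0)) p"
    by (rule hasW_add[OF hasW_mult[OF hasW_fst hasW_const] hasW_mult[OF hasW_snd hasW_const]])
  then show ?thesis by (simp add: brk_def)
qed

lemma hasW_B: "hasW (\<lambda>x. hbrk x lam) 0 (snd lam) 0 (- fst lam) p"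
proof -
  have "hasW (\<lambda>x. (- fst lam) * cnj (snd x) + snd lam * cnj (fst x)) ((- fst lam) * 0 + cnj (snd p) * 0 + (snd lam * 0 + cnj (fst p) * 0))
      ((- fst lam) * 0 + cnj (snd p) * 0 + (snd lam * 1 + cnj (fst p) * 0))
      ((- fst lam) * 0 + cnj (snd p) * 0 + (snd lam * 0 + cnj (fst p) * 0))
      ((- fst lam) * 1 + cnj (snd p) * 0 + (snd lam * 0 + cnj (fst p) * 0)) p"
    by (rule hasW_add[OF hasW_mult[OF hasW_const hasW_csnd] hasW_mult[OF hasW_const hasW_cfst]])
  then show ?thesis by (simp add: hbrk_def mult.commute)
qed

lemma U_fun: "U lam j m n = (\<lambda>x. Qf x ^ j * brk x lam ^ m * hbrk x lam ^ n)"
  by (simp add: fun_eq_iff U_def)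

lemma hasW_U:
  assumes "p \<noteq> 0"
  shows "hasW (U lam j m n) (dA1 lam j m n p) (dB1 lam j m n p) (dA2 lam j m n p) (dB2 lam j m n p) p"
  unfolding U_fun
  apply (rule hasW_cong[OF hasW_mult[OF hasW_mult[OF hasW_power[OF hasW_Qf[OF assms]] hasW_power[OF hasW_A]] hasW_power[OF hasW_B]]])
     apply (cases j; cases m; simp add: dA1_def U_def algebra_simps power2_eq_square)
    apply (cases j; cases n; simp add: dB1_def U_def algebra_simps power2_eq_square)
   apply (cases j; cases m; simp add: dA2_def U_def algebra_simps power2_eq_square)
  apply (cases j; cases n; simp add: dB2_def U_def algebra_simps power2_eq_square)
  done


lemma hasW_cmult: "hasW f a1 b1 a2 b2 p \<Longrightarrow> hasW (\<lambda>x. c * f x) (c*a1) (c*b1) (c*a2) (c*b2) p"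
proof -
  assume h: "hasW f a1 b1 a2 b2 p"
  show ?thesis using hasW_mult[OF hasW_const h, of c] by simp
qed

lemma U_Sq: "p \<noteq> 0 \<Longrightarrow> Sq p * U lam (Suc j) m n p = U lam j m n p"
  using Sq_nz[of p] by (simp add: U_def Qf_def field_simps)

lemma U_A: "of_nat m * brk p lam * U lam j (m-1) n p = of_nat m * U lam j m n p"
  by (cases m) (simp_all add: U_def algebra_simps)

lemma U_B: "of_nat n * hbrk p lam * U lam j m (n-1) p = of_nat n * U lam j m n p"
  by (cases n) (simp_all add: U_def algebra_simps)

lemma eul_a:
  assumes "p \<noteq> 0"
  shows "fst p * dA1 lam j m n p + snd p * dA2 lam j m n p = (of_nat m - of_nat j) * U lam j m n p"
proof -
  have "fst p * dA1 lam j m n p + snd p * dA2 lam j m n p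
      = - of_nat j * (Sq p * U lam (Suc j) m n p) + of_nat m * brk p lam * U lam j (m-1) n p"
    by (simp add: dA1_def dA2_def Sq_def brk_def algebra_simps)
  also have "\<dots> = - of_nat j * U lam j m n p + of_nat m * U lam j m n p"
    by (simp only: U_Sq[OF assms] U_A)
  also have "\<dots> = (of_nat m - of_nat j) * U lam j m n p"
    by (simp add: algebra_simps)
  finally show ?thesis .
qed

lemma eul_b:
  assumes "p \<noteq> 0"
  shows "cnj (fst p) * dB1 lam j m n p + cnj (snd p) * dB2 lam j m n p = (of_nat n - of_nat j) * U lam j m n p"
proof -
  have "cnj (fst p) * dB1 lam j m n p + cnj (snd p) * dB2 lam j m n p
      = - of_nat j * (Sq p * U lam (Suc j) m n p) + of_nat n * hbrk p lam * U lam j m (n-1) p"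
    by (simp add: dB1_def dB2_def Sq_def hbrk_def algebra_simps)
  also have "\<dots> = - of_nat j * U lam j m n p + of_nat n * U lam j m n p"
    by (simp only: U_Sq[OF assms] U_B)
  also have "\<dots> = (of_nat n - of_nat j) * U lam j m n p"
    by (simp add: algebra_simps)
  finally show ?thesis .
qed

definition cA1 where "cA1 lam j m n p = - of_nat j * (fst p * dA1 lam (Suc j) m n p + U lam (Suc j) m n p) + of_nat n * snd lam * dA1 lam j m (n-1) p"
definition cA2 where "cA2 lam j m n p = - of_nat j * (snd p * dA2 lam (Suc j) m n p + U lam (Suc j) m n p) + (- (of_nat n * fst lam)) * dA2 lam j m (n-1) p"

lemma hasW_dB1:
  assumes "p \<noteq> 0"
  shows "hasW (dB1 lam j m n) (cA1 lam j m n p)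
     (- of_nat j * (fst p * dB1 lam (Suc j) m n p) + of_nat n * snd lam * dB1 lam j m (n-1) p)
     (- of_nat j * (fst p * dA2 lam (Suc j) m n p) + of_nat n * snd lam * dA2 lam j m (n-1) p)
     (- of_nat j * (fst p * dB2 lam (Suc j) m n p) + of_nat n * snd lam * dB2 lam j m (n-1) p) p"
proof -
  have e: "dB1 lam j m n = (\<lambda>x. (- of_nat j) * (fst x * U lam (Suc j) m n x) + (of_nat n * snd lam) * U lam j m (n-1) x)"
    by (simp add: fun_eq_iff dB1_def algebra_simps)
  show ?thesis unfolding e
    by (rule hasW_cong[OF hasW_add[OF hasW_cmult[OF hasW_mult[OF hasW_fst hasW_U[OF assms]]] hasW_cmult[OF hasW_U[OF assms]]]])
      (simp_all add: cA1_def algebra_simps)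
qed

lemma hasW_dB2:
  assumes "p \<noteq> 0"
  shows "hasW (dB2 lam j m n)
     (- of_nat j * (snd p * dA1 lam (Suc j) m n p) + (- (of_nat n * fst lam)) * dA1 lam j m (n-1) p)
     (- of_nat j * (snd p * dB1 lam (Suc j) m n p) + (- (of_nat n * fst lam)) * dB1 lam j m (n-1) p)
     (cA2 lam j m n p)
     (- of_nat j * (snd p * dB2 lam (Suc j) m n p) + (- (of_nat n * fst lam)) * dB2 lam j m (n-1) p) p"
proof -
  have e: "dB2 lam j m n = (\<lambda>x. (- of_nat j) * (snd x * U lam (Suc j) m n x) + (- (of_nat n * fst lam)) * U lam j m (n-1) x)"
    by (simp add: fun_eq_iff dB2_def algebra_simps)
  show ?thesis unfolding e
    by (rule hasW_cong[OF hasW_add[OF hasW_cmult[OF hasW_mult[OF hasW_snd hasW_U[OF assms]]] hasW_cmult[OF hasW_U[OF assms]]]])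
      (simp_all add: cA2_def algebra_simps)
qed

lemma flat:
  assumes "p \<noteq> 0"
  shows "cA1 lam j m n p + cA2 lam j m n p = - of_nat j * (of_nat m + of_nat n + 1 - of_nat j) * U lam (Suc j) m n p"
proof -
  have "cA1 lam j m n p + cA2 lam j m n p = - of_nat j * (2 * U lam (Suc j) m n p)
     - of_nat j * (fst p * dA1 lam (Suc j) m n p + snd p * dA2 lam (Suc j) m n p)
     - of_nat j * (of_nat n * hbrk p lam * U lam (Suc j) m (n-1) p)"
    by (simp add: cA1_def cA2_def dA1_def dA2_def hbrk_def algebra_simps)
  also have "\<dots> = - of_nat j * (2 * U lam (Suc j) m n p)
     - of_nat j * ((of_nat m - of_nat (Suc j)) * U lam (Suc j) m n p)
     - of_nat j * (of_nat n * U lam (Suc j) m n p)"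
    by (simp only: eul_a[OF assms] U_B)
  also have "\<dots> = - of_nat j * (of_nat m + of_nat n + 1 - of_nat j) * U lam (Suc j) m n p"
    by (simp add: algebra_simps)
  finally show ?thesis .
qed


lemma open_nz: "open (- {0::C2})"
  by (simp add: open_Compl)

lemma lap_sum:
  assumes p: "p \<noteq> 0" and J: "finite J"
  shows "burns_laplacian N (\<lambda>u. \<Sum>j\<in>J. E j * U lam j k l u) p =
    of_real (2 / (1 + N / nsq p)) *
     ((\<Sum>j\<in>J. E j * (- of_nat j * (of_nat k + of_nat l + 1 - of_nat j)) * U lam (Suc j) k l p)
      + of_real (N / (nsq p)^2) * (\<Sum>j\<in>J. E j * ((of_nat l - of_nat j) * (of_nat k - of_nat j)) * U lam j k l p))"
proof -
  define f where "f = (\<lambda>u. \<Sum>j\<in>J. E j * U lam j k l u)"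
  define S where "S = - {0::C2}"
  have oS: "open S" and pS: "p \<in> S" using p open_nz by (auto simp: S_def)
  have hf: "hasW f (\<Sum>j\<in>J. E j * dA1 lam j k l x) (\<Sum>j\<in>J. E j * dB1 lam j k l x)
       (\<Sum>j\<in>J. E j * dA2 lam j k l x) (\<Sum>j\<in>J. E j * dB2 lam j k l x) x" if "x \<in> S" for x
    unfolding f_def using that by (intro hasW_sum hasW_cmult hasW_U) (auto simp: S_def)
  define G1 where "G1 = (\<lambda>x. \<Sum>j\<in>J. E j * dB1 lam j k l x)"
  define G2 where "G2 = (\<lambda>x. \<Sum>j\<in>J. E j * dB2 lam j k l x)"
  define H where "H = (\<lambda>x. \<Sum>j\<in>J. E j * ((of_nat l - of_nat j) * U lam j k l x))"
  have e1: "W1b f x = G1 x" if "x \<in> S" for x using hasW_W(2)[OF hf[OF that]] by (simp add: G1_def)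
  have e2: "W2b f x = G2 x" if "x \<in> S" for x using hasW_W(4)[OF hf[OF that]] by (simp add: G2_def)
  have e3: "Eulb f x = H x" if "x \<in> S" for x
  proof -
    have x: "x \<noteq> 0" using that by (simp add: S_def)
    have "Eulb f x = (\<Sum>j\<in>J. E j * (cnj (fst x) * dB1 lam j k l x + cnj (snd x) * dB2 lam j k l x))"
      unfolding Eulb_def e1[OF that] e2[OF that] G1_def G2_def
      by (simp add: sum_distrib_left sum.distrib algebra_simps)
    also have "\<dots> = H x" unfolding H_def by (simp add: eul_b[OF x])
    finally show ?thesis .
  qed
  have w1: "W1 (W1b f) p = (\<Sum>j\<in>J. E j * cA1 lam j k l p)"
    apply (rule hasW_W(1))
    apply (rule hasW_transform[where f=G1 and S=S, OF _ oS pS])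
     apply (unfold G1_def)[1]
     apply (rule hasW_sum, rule hasW_cmult, rule hasW_dB1[OF p])
    using e1 by (simp add: G1_def)
  have w2: "W2 (W2b f) p = (\<Sum>j\<in>J. E j * cA2 lam j k l p)"
    apply (rule hasW_W(3))
    apply (rule hasW_transform[where f=G2 and S=S, OF _ oS pS])
     apply (unfold G2_def)[1]
     apply (rule hasW_sum, rule hasW_cmult, rule hasW_dB2[OF p])
    using e2 by (simp add: G2_def)
  have hH: "hasW (Eulb f) (\<Sum>j\<in>J. E j * ((of_nat l - of_nat j) * dA1 lam j k l p))
     (\<Sum>j\<in>J. E j * ((of_nat l - of_nat j) * dB1 lam j k l p))
     (\<Sum>j\<in>J. E j * ((of_nat l - of_nat j) * dA2 lam j k l p))
     (\<Sum>j\<in>J. E j * ((of_nat l - of_nat j) * dB2 lam j k l p)) p"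
    apply (rule hasW_transform[where f=H and S=S, OF _ oS pS])
     apply (unfold H_def)[1]
     apply (rule hasW_sum, rule hasW_cmult, rule hasW_cmult, rule hasW_U[OF p])
    using e3 by simp
  have eu: "Eul (Eulb f) p = (\<Sum>j\<in>J. E j * ((of_nat l - of_nat j) * (of_nat k - of_nat j)) * U lam j k l p)"
  proof -
    have "Eul (Eulb f) p = (\<Sum>j\<in>J. E j * ((of_nat l - of_nat j) * (fst p * dA1 lam j k l p + snd p * dA2 lam j k l p)))"
    proof -
      have "Eul (Eulb f) p = (\<Sum>j\<in>J. fst p * (E j * ((of_nat l - of_nat j) * dA1 lam j k l p)) + snd p * (E j * ((of_nat l - of_nat j) * dA2 lam j k l p)))"
        unfolding Eul_def hasW_W(1)[OF hH] hasW_W(3)[OF hH]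
        by (simp add: sum_distrib_left sum.distrib)
      also have "\<dots> = (\<Sum>j\<in>J. E j * ((of_nat l - of_nat j) * (fst p * dA1 lam j k l p + snd p * dA2 lam j k l p)))"
        by (rule sum.cong) (simp_all add: algebra_simps)
      finally show ?thesis .
    qed
    then show ?thesis by (simp add: eul_a[OF p] algebra_simps)
  qed
  have fl: "W1 (W1b f) p + W2 (W2b f) p = (\<Sum>j\<in>J. E j * (- of_nat j * (of_nat k + of_nat l + 1 - of_nat j)) * U lam (Suc j) k l p)"
    unfolding w1 w2 sum.distrib[symmetric]
    by (rule sum.cong[OF refl]) (simp add: distrib_left[symmetric] flat[OF p] mult.assoc)
  show ?thesis
    unfolding f_def[symmetric] burns_laplacian_def fl[symmetric] eu[symmetric] by simp
qed




definition cc :: "nat \<Rightarrow> nat \<Rightarrow> nat \<Rightarrow> real" where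
  "cc k l j = fact (k + l - j) / (fact j * fact (k - j) * fact (l - j))"

lemma cc_rec:
  assumes "i < k" "i < l"
  shows "cc k l (Suc i) * real (Suc i) * (real k + real l - real i) = cc k l i * (real l - real i) * (real k - real i)"
proof -
  obtain a where a: "k = Suc (i + a)" using less_imp_Suc_add[OF assms(1)] by blast
  obtain b where b: "l = Suc (i + b)" using less_imp_Suc_add[OF assms(2)] by blast
  have e1: "k + l - Suc i = Suc (i + a + b)" "k + l - i = Suc (Suc (i + a + b))"
    "k - Suc i = a" "l - Suc i = b" "k - i = Suc a" "l - i = Suc b" using a b by simp_all
  have r: "real k + real l - real i = real (Suc (Suc (i + a + b)))" "real l - real i = real (Suc b)"
    "real k - real i = real (Suc a)" using a b by simp_all
  define n where "n = i + a + b"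
  have fs: "fact (Suc (Suc n)) = real (Suc (Suc n)) * fact (Suc n)" "fact (Suc n) = real (Suc n) * (fact n :: real)"
    "fact (Suc i) = real (Suc i) * (fact i :: real)" "fact (Suc a) = real (Suc a) * (fact a :: real)"
    "fact (Suc b) = real (Suc b) * (fact b :: real)" by simp_all
  have nz: "(fact i :: real) \<noteq> 0" "(fact a :: real) \<noteq> 0" "(fact b :: real) \<noteq> 0" by simp_all
  show ?thesis unfolding cc_def e1 r n_def[symmetric] fs
    using nz by (simp add: divide_simps del: of_nat_Suc)
qed

lemma comb_sum:
  assumes "j \<le> b" "b \<le> a"
  shows "(\<Sum>m\<le>b. (a choose m) * (b choose m) * (m choose j)) = (a choose j) * ((a + b - j) choose (b - j))"
proof -
  have "(\<Sum>m\<le>b. (a choose m) * (b choose m) * (m choose j)) = (\<Sum>m\<in>{j..b}. (a choose m) * (b choose m) * (m choose j))"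
    by (rule sum.mono_neutral_right) auto
  also have "\<dots> = (\<Sum>m\<in>{j..b}. (a choose j) * ((a - j) choose (m - j)) * (b choose m))"
  proof (rule sum.cong[OF refl])
    fix m assume m: "m \<in> {j..b}"
    have "(a choose m) * (m choose j) = (a choose j) * ((a - j) choose (m - j))"
      using m assms by (intro choose_mult) auto
    then show "(a choose m) * (b choose m) * (m choose j) = (a choose j) * ((a - j) choose (m - j)) * (b choose m)"
      by (metis mult.assoc mult.commute)
  qed
  also have "\<dots> = (\<Sum>i\<in>{0..b-j}. (a choose j) * ((a - j) choose i) * (b choose (j + i)))"
    unfolding sum.atLeastAtMost_shift_0[OF assms(1)] o_def by simp
  also have "\<dots> = (a choose j) * (\<Sum>i\<le>b-j. ((a - j) choose i) * (b choose ((b - j) - i)))"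
    unfolding sum_distrib_left atLeast0AtMost
  proof (rule sum.cong[OF refl])
    fix i assume "i \<in> {..b-j}"
    then have h1: "b choose (j + i) = b choose (b - (j + i))" using assms by (intro binomial_symmetric) auto
    have h2: "b - (j + i) = b - j - i" by simp
    have h: "b choose (j + i) = b choose (b - j - i)" using h1 unfolding h2 .
    show "(a choose j) * ((a - j) choose i) * (b choose (j + i)) = (a choose j) * (((a - j) choose i) * (b choose (b - j - i)))"
      by (simp only: h mult.assoc)
  qed
  also have "\<dots> = (a choose j) * ((a - j + b) choose (b - j))" by (simp only: vandermonde)
  also have "a - j + b = a + b - j" using assms by simp
  finally show ?thesis .
qed

lemma cc_choose:
  assumes "j \<le> b" "b \<le> a"
  shows "cc a b j = real ((a choose j) * ((a + b - j) choose (b - j)))"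
proof -
  have "real ((a choose j) * ((a + b - j) choose (b - j))) = fact a / (fact j * fact (a - j)) * (fact (a + b - j) / (fact (b - j) * fact (a + b - j - (b - j))))"
    using assms by (simp add: binomial_fact)
  also have "a + b - j - (b - j) = a" using assms by simp
  finally show ?thesis unfolding cc_def by (simp add: field_simps)
qed

lemma core:
  fixes y :: real
  assumes "b \<le> a"
  shows "(\<Sum>j\<in>{0..b}. cc a b j * y ^ j) = (\<Sum>m\<in>{0..b}. real (a choose m) * real (b choose m) * (1 + y) ^ m)"
proof -
  have "(\<Sum>m\<in>{0..b}. real (a choose m) * real (b choose m) * (1 + y) ^ m)
      = (\<Sum>m\<le>b. real (a choose m) * real (b choose m) * (\<Sum>j\<le>b. real (m choose j) * y ^ j))"
    unfolding atLeast0AtMost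
  proof (rule sum.cong[OF refl])
    fix m assume m: "m \<in> {..b}"
    have "(1 + y) ^ m = (y + 1) ^ m" by (metis add.commute)
    also have "\<dots> = (\<Sum>j\<le>m. real (m choose j) * y ^ j)"
      unfolding binomial_ring[of y 1 m] by simp
    also have "\<dots> = (\<Sum>j\<le>b. real (m choose j) * y ^ j)"
      using m by (intro sum.mono_neutral_left) auto
    finally show "real (a choose m) * real (b choose m) * (1 + y) ^ m = real (a choose m) * real (b choose m) * (\<Sum>j\<le>b. real (m choose j) * y ^ j)"
      by simp
  qed
  also have "\<dots> = (\<Sum>m\<le>b. \<Sum>j\<le>b. y ^ j * real ((a choose m) * (b choose m) * (m choose j)))"
    by (simp add: sum_distrib_left mult_ac)
  also have "\<dots> = (\<Sum>j\<le>b. \<Sum>m\<le>b. y ^ j * real ((a choose m) * (b choose m) * (m choose j)))"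
    by (rule sum.swap)
  also have "\<dots> = (\<Sum>j\<le>b. y ^ j * real (\<Sum>m\<le>b. (a choose m) * (b choose m) * (m choose j)))"
    by (simp only: sum_distrib_left of_nat_sum)
  also have "\<dots> = (\<Sum>j\<le>b. cc a b j * y ^ j)"
    by (rule sum.cong[OF refl]) (use assms in \<open>simp add: comb_sum cc_choose\<close>)
  finally show ?thesis by (simp add: atLeast0AtMost)
qed




definition KK :: "nat \<Rightarrow> nat \<Rightarrow> real" where "KK k l = fact k * fact l / fact (k + l)"

lemma phi_cc: "phi N lam k l u = of_real (KK k l) * (\<Sum>j = 0..min k l. of_real (cc k l j * (N / nsq u) ^ j) * brk u lam ^ k * hbrk u lam ^ l)"
  by (simp add: phi_def cc_def KK_def)

lemma Qf_pow: "Qf u ^ j = of_real (inverse (nsq u) ^ j)"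
  by (simp add: Qf_def Sq_nsq of_real_inverse)

lemma phi_U: "phi N lam k l = (\<lambda>u. \<Sum>j\<in>{0..min k l}. of_real (KK k l * cc k l j * N ^ j) * U lam j k l u)"
proof
  fix u
  show "phi N lam k l u = (\<Sum>j\<in>{0..min k l}. of_real (KK k l * cc k l j * N ^ j) * U lam j k l u)"
    unfolding phi_cc sum_distrib_left
  proof (rule sum.cong[OF refl])
    fix j
    have "(N / nsq u) ^ j = N ^ j * inverse (nsq u) ^ j" by (simp add: divide_inverse power_mult_distrib)
    then show "of_real (KK k l) * (of_real (cc k l j * (N / nsq u) ^ j) * brk u lam ^ k * hbrk u lam ^ l) =
         of_real (KK k l * cc k l j * N ^ j) * U lam j k l u"
      by (simp add: U_def Qf_pow mult_ac)
  qed
qed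

lemma U_N: "of_real (N / (nsq p)^2) * U lam j m n p = of_real N * U lam (Suc (Suc j)) m n p"
proof -
  have "U lam (Suc (Suc j)) m n p = Qf p ^ 2 * U lam j m n p" by (simp add: U_def mult_ac power2_eq_square)
  moreover have "Qf p ^ 2 = of_real (inverse (nsq p) ^ 2)" by (rule Qf_pow)
  ultimately show ?thesis by (simp add: divide_inverse power_inverse power2_eq_square)
qed

lemma coef_zero:
  assumes "i < k" "i < l"
  shows "of_real (KK k l * cc k l (Suc i) * N ^ Suc i) * (- of_nat (Suc i) * (of_nat k + of_nat l + 1 - of_nat (Suc i)))
     + of_real (KK k l * cc k l i * N ^ i) * ((of_nat l - of_nat i) * (of_nat k - of_nat i)) * of_real N = (0::complex)"
proof -
  have r: "cc k l (Suc i) * real (Suc i) * (real k + real l - real i) = cc k l i * (real l - real i) * (real k - real i)"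
    by (rule cc_rec[OF assms])
  have "KK k l * cc k l (Suc i) * N ^ Suc i * (- real (Suc i) * (real k + real l + 1 - real (Suc i)))
     + KK k l * cc k l i * N ^ i * ((real l - real i) * (real k - real i)) * N
     = KK k l * N ^ Suc i * (cc k l i * (real l - real i) * (real k - real i) - cc k l (Suc i) * real (Suc i) * (real k + real l - real i))"
    by (simp add: algebra_simps)
  also have "\<dots> = 0" using r by simp
  finally have "complex_of_real (KK k l * cc k l (Suc i) * N ^ Suc i * (- real (Suc i) * (real k + real l + 1 - real (Suc i)))
     + KK k l * cc k l i * N ^ i * ((real l - real i) * (real k - real i)) * N) = 0" by simp
  then show ?thesis by simp
qed

lemma lap_zero:
  assumes p: "p \<noteq> 0"
  shows "burns_laplacian N (phi N lam k l) p = 0"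
proof -
  define M where "M = min k l"
  define E where "E j = complex_of_real (KK k l * cc k l j * N ^ j)" for j
  define a where "a j = E j * (- of_nat j * (of_nat k + of_nat l + 1 - of_nat j))" for j
  define b where "b j = E j * ((of_nat l - of_nat j) * (of_nat k - of_nat j)) * of_real N" for j
  have L: "burns_laplacian N (phi N lam k l) p = of_real (2 / (1 + N / nsq p)) *
     ((\<Sum>j\<in>{0..M}. a j * U lam (Suc j) k l p) + (\<Sum>j\<in>{0..M}. b j * U lam (Suc (Suc j)) k l p))"
  proof -
    have s2: "of_real (N / (nsq p)^2) * (\<Sum>j\<in>{0..M}. E j * ((of_nat l - of_nat j) * (of_nat k - of_nat j)) * U lam j k l p)
       = (\<Sum>j\<in>{0..M}. b j * U lam (Suc (Suc j)) k l p)"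
      unfolding sum_distrib_left
    proof (rule sum.cong[OF refl])
      fix j
      have "of_real (N / (nsq p)^2) * (E j * ((of_nat l - of_nat j) * (of_nat k - of_nat j)) * U lam j k l p)
        = E j * ((of_nat l - of_nat j) * (of_nat k - of_nat j)) * (of_real (N / (nsq p)^2) * U lam j k l p)"
        by (simp only: mult_ac)
      also have "\<dots> = b j * U lam (Suc (Suc j)) k l p" unfolding U_N b_def by (simp only: mult_ac)
      finally show "of_real (N / (nsq p)^2) * (E j * ((of_nat l - of_nat j) * (of_nat k - of_nat j)) * U lam j k l p) = b j * U lam (Suc (Suc j)) k l p" .
    qed
    show ?thesis
      unfolding phi_U lap_sum[OF p finite_atLeastAtMost] M_def[symmetric] E_def[symmetric] s2
      by (simp add: a_def)
  qed
  have Z: "(\<Sum>j\<in>{0..M}. a j * U lam (Suc j) k l p) + (\<Sum>j\<in>{0..M}. b j * U lam (Suc (Suc j)) k l p) = 0"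
  proof (cases M)
    case 0
    then have "k = 0 \<or> l = 0" by (simp add: M_def min_def split: if_splits)
    then show ?thesis using 0 by (auto simp: a_def b_def)
  next
    case (Suc M')
    have bM: "b M = 0" by (auto simp: b_def M_def min_def)
    have a0: "a 0 = 0" by (simp add: a_def)
    have "(\<Sum>j\<in>{0..M}. a j * U lam (Suc j) k l p) + (\<Sum>j\<in>{0..M}. b j * U lam (Suc (Suc j)) k l p)
      = (\<Sum>i\<in>{0..M'}. (a (Suc i) + b i) * U lam (Suc (Suc i)) k l p)"
      unfolding Suc sum.atLeast0_atMost_Suc_shift[of "\<lambda>j. a j * U lam (Suc j) k l p"]
        sum.atLeast0_atMost_Suc[of "\<lambda>j. b j * U lam (Suc (Suc j)) k l p"]
      using bM Suc by (simp add: a0 sum.distrib distrib_right)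
    also have "\<dots> = 0"
    proof (rule sum.neutral, rule ballI)
      fix i assume "i \<in> {0..M'}"
      then have "i < k" "i < l" using Suc by (auto simp: M_def)
      then have "a (Suc i) + b i = 0" unfolding a_def b_def E_def by (rule coef_zero)
      then show "(a (Suc i) + b i) * U lam (Suc (Suc i)) k l p = 0" by simp
    qed
    finally show ?thesis .
  qed
  show ?thesis unfolding L Z by simp
qed




lemma phi_sum: "phi N lam k l u = of_real (KK k l * (\<Sum>j\<in>{0..min k l}. cc k l j * (N / nsq u) ^ j)) * (brk u lam ^ k * hbrk u lam ^ l)"
  unfolding phi_cc by (simp add: sum_distrib_left sum_distrib_right mult.assoc)

lemma KK_cc0: "KK k l * cc k l 0 = 1"
  by (simp add: KK_def cc_def)

lemma sum_split0: fixes M :: nat and g :: "nat \<Rightarrow> real" shows "(\<Sum>j\<in>{0..M}. g j) = g 0 + (\<Sum>j\<in>{1..M}. (g j :: real))"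
  using sum.atLeast_Suc_atMost[of 0 M g] by simp

lemma phi_N0: "phi 0 lam k l u = brk u lam ^ k * hbrk u lam ^ l"
proof -
  have "(\<Sum>j\<in>{0..min k l}. cc k l j * (0 / nsq u) ^ j) = cc k l 0"
    unfolding sum_split0 by simp
  then show ?thesis unfolding phi_sum by (simp add: KK_cc0)
qed

lemma cc_nonneg: "cc k l j \<ge> 0" by (simp add: cc_def)
lemma KK_nonneg: "KK k l \<ge> 0" by (simp add: KK_def)

lemma asym:
  assumes N: "N > 0"
  shows "\<exists>C R. \<forall>u. nsq u \<ge> R \<longrightarrow>
          cmod (phi N lam k l u - brk u lam ^ k * hbrk u lam ^ l)
            \<le> C * cmod (brk u lam ^ k * hbrk u lam ^ l) / nsq u"
proof (intro exI allI impI)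
  fix u assume s1: "nsq u \<ge> 1"
  define s where "s = nsq u"
  define X where "X = brk u lam ^ k * hbrk u lam ^ l"
  define C where "C = (\<Sum>j\<in>{1..min k l}. KK k l * cc k l j * N ^ j)"
  have s: "s \<ge> 1" using s1 by (simp add: s_def)
  have eq: "phi N lam k l u - X = of_real (\<Sum>j\<in>{1..min k l}. KK k l * cc k l j * (N / s) ^ j) * X"
    unfolding phi_sum X_def[symmetric] s_def[symmetric] sum_split0
    by (simp add: KK_cc0 sum_distrib_left algebra_simps mult.assoc)
  have nn: "(\<Sum>j\<in>{1..min k l}. KK k l * cc k l j * (N / s) ^ j) \<ge> 0"
    using N s by (intro sum_nonneg) (simp add: cc_nonneg KK_nonneg)
  have le: "(\<Sum>j\<in>{1..min k l}. KK k l * cc k l j * (N / s) ^ j) \<le> (\<Sum>j\<in>{1..min k l}. KK k l * cc k l j * N ^ j / s)"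
  proof (rule sum_mono)
    fix j assume j: "j \<in> {1..min k l}"
    have "s ^ 1 \<le> s ^ j" using j s by (intro power_increasing) auto
    then have "N ^ j / s ^ j \<le> N ^ j / s" using s N by (intro divide_left_mono) auto
    then have "(N / s) ^ j \<le> N ^ j / s" by (simp add: power_divide)
    then have "KK k l * cc k l j * (N / s) ^ j \<le> KK k l * cc k l j * (N ^ j / s)"
      by (rule mult_left_mono) (simp add: KK_nonneg cc_nonneg)
    then show "KK k l * cc k l j * (N / s) ^ j \<le> KK k l * cc k l j * N ^ j / s"
      by simp
  qed
  have "cmod (phi N lam k l u - X) = (\<Sum>j\<in>{1..min k l}. KK k l * cc k l j * (N / s) ^ j) * cmod X"
    by (simp only: eq norm_mult norm_of_real abs_of_nonneg[OF nn])
  also have "\<dots> \<le> (C / s) * cmod X"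
    using le by (intro mult_right_mono) (auto simp: C_def sum_divide_distrib)
  finally show "cmod (phi N lam k l u - X) \<le> C * cmod X / nsq u" by (simp add: s_def)
qed

lemma jac:
  fixes x :: real
  assumes "b \<le> a" "x > 0"
  shows "x powi (- int b) * jacobiP b (a - b) 0 (1 + 2 * x) = (\<Sum>j\<in>{0..b}. cc a b j * (1 / x) ^ j)"
proof -
  have "x powi (- int b) * jacobiP b (a - b) 0 (1 + 2 * x)
     = (\<Sum>s\<in>{0..b}. real (a choose (b - s)) * real (b choose s) * (1 + 1 / x) ^ (b - s))"
    unfolding jacobiP_def power_int_minus power_int_of_nat sum_distrib_left
  proof (rule sum.cong[OF refl])
    fix s assume s: "s \<in> {0..b}"
    have e: "b + (a - b) = a" using assms by simp
    have h1: "(1 + 2 * x - 1) / 2 = x" "(1 + 2 * x + 1) / 2 = 1 + x" by simp_all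
    have xb: "x ^ b = x ^ s * x ^ (b - s)" using s by (simp add: power_add[symmetric])
    have h: "1 + 1 / x = (1 + x) / x" using assms by (simp add: field_simps)
    have "(1 + 1 / x) ^ (b - s) = (1 + x) ^ (b - s) / x ^ (b - s)"
      by (simp only: h power_divide)
    then show "inverse (x ^ b) * (real ((b + (a - b)) choose (b - s)) * real ((b + 0) choose s) *
          ((1 + 2 * x - 1) / 2) ^ s * ((1 + 2 * x + 1) / 2) ^ (b - s)) =
         real (a choose (b - s)) * real (b choose s) * (1 + 1 / x) ^ (b - s)"
      unfolding e xb h1 using assms by (simp add: field_simps)
  qed
  also have "\<dots> = (\<Sum>s\<in>{0..b}. real (a choose s) * real (b choose s) * (1 + 1 / x) ^ s)"
  proof (subst sum.atLeastAtMost_rev, rule sum.cong[OF refl])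
    fix s assume s: "s \<in> {0..b}"
    then have "b - (b + 0 - s) = s" by simp
    moreover have "b choose (b + 0 - s) = b choose s" using s by (simp add: binomial_symmetric[symmetric])
    ultimately show "real (a choose (b - (b + 0 - s))) * real (b choose (b + 0 - s)) * (1 + 1 / x) ^ (b - (b + 0 - s))
       = real (a choose s) * real (b choose s) * (1 + 1 / x) ^ s" by simp
  qed
  also have "\<dots> = (\<Sum>j\<in>{0..b}. cc a b j * (1 / x) ^ j)"
    using core[OF assms(1), of "1 / x"] by simp
  finally show ?thesis .
qed

lemma cc_sym: "cc k l j = cc l k j"
  by (simp add: cc_def add.commute mult_ac)

lemma KK_sym: "KK k l = KK l k"
  by (simp add: KK_def add.commute mult.commute)

lemma jacobi_le:
  assumes N: "N > 0" and u: "u \<noteq> 0" and lk: "l \<le> k"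
  shows "phi N lam k l u = of_real (fact k * fact l / fact (k + l)
             * (nsq u / N) powi (- int l) * jacobiP l (k - l) 0 (1 + 2 * (nsq u / N)))
             * brk u lam ^ k * hbrk u lam ^ l"
proof -
  have x: "nsq u / N > 0" using nsq_pos[OF u] N by simp
  have m: "min k l = l" using lk by simp
  have "(\<Sum>j\<in>{0..l}. cc k l j * (N / nsq u) ^ j) = (nsq u / N) powi (- int l) * jacobiP l (k - l) 0 (1 + 2 * (nsq u / N))"
    using jac[OF lk x] by simp
  then show ?thesis unfolding phi_sum m by (simp add: KK_def mult.assoc)
qed

lemma jacobi_gt:
  assumes N: "N > 0" and u: "u \<noteq> 0" and lk: "k < l"
  shows "phi N lam k l u = of_real (fact k * fact l / fact (k + l)
             * (nsq u / N) powi (- int k) * jacobiP k (l - k) 0 (1 + 2 * (nsq u / N)))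
             * brk u lam ^ k * hbrk u lam ^ l"
proof -
  have x: "nsq u / N > 0" using nsq_pos[OF u] N by simp
  have m: "min k l = k" using lk by simp
  have "(\<Sum>j\<in>{0..k}. cc k l j * (N / nsq u) ^ j) = (\<Sum>j\<in>{0..k}. cc l k j * (1 / (nsq u / N)) ^ j)"
    by (simp add: cc_sym)
  also have "\<dots> = (nsq u / N) powi (- int k) * jacobiP k (l - k) 0 (1 + 2 * (nsq u / N))"
    using jac[of k l, OF _ x] lk by simp
  finally show ?thesis unfolding phi_sum m by (simp add: KK_def mult.assoc)
qed



theorem mainTheorem5:
  fixes N :: real and lam :: C2 and k l :: nat
  assumes "N > 0"
  shows "(\<forall>u. u \<noteq> 0 \<longrightarrow> burns_laplacian N (phi N lam k l) u = 0)
    \<and> (\<exists>C R. \<forall>u. nsq u \<ge> R \<longrightarrow>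
          cmod (phi N lam k l u - brk u lam ^ k * hbrk u lam ^ l)
            \<le> C * cmod (brk u lam ^ k * hbrk u lam ^ l) / nsq u)
    \<and> (\<forall>u. phi 0 lam k l u = brk u lam ^ k * hbrk u lam ^ l)
    \<and> (\<forall>u. u \<noteq> 0 \<longrightarrow> l \<le> k \<longrightarrow>
          phi N lam k l u = of_real (fact k * fact l / fact (k + l)
             * (nsq u / N) powi (- int l) * jacobiP l (k - l) 0 (1 + 2 * (nsq u / N)))
             * brk u lam ^ k * hbrk u lam ^ l)
    \<and> (\<forall>u. u \<noteq> 0 \<longrightarrow> k < l \<longrightarrow>
          phi N lam k l u = of_real (fact k * fact l / fact (k + l)
             * (nsq u / N) powi (- int k) * jacobiP k (l - k) 0 (1 + 2 * (nsq u / N)))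
             * brk u lam ^ k * hbrk u lam ^ l)"
  proof (intro conjI)
  show "\<forall>u. u \<noteq> 0 \<longrightarrow> burns_laplacian N (phi N lam k l) u = 0" using lap_zero by blast
  show "\<exists>C R. \<forall>u. nsq u \<ge> R \<longrightarrow>
          cmod (phi N lam k l u - brk u lam ^ k * hbrk u lam ^ l)
            \<le> C * cmod (brk u lam ^ k * hbrk u lam ^ l) / nsq u" by (rule asym[OF assms])
  show "\<forall>u. phi 0 lam k l u = brk u lam ^ k * hbrk u lam ^ l" using phi_N0 by blast
  show "\<forall>u. u \<noteq> 0 \<longrightarrow> l \<le> k \<longrightarrow>
          phi N lam k l u = of_real (fact k * fact l / fact (k + l)
             * (nsq u / N) powi (- int l) * jacobiP l (k - l) 0 (1 + 2 * (nsq u / N)))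
             * brk u lam ^ k * hbrk u lam ^ l" using jacobi_le[OF assms] by blast
  show "\<forall>u. u \<noteq> 0 \<longrightarrow> k < l \<longrightarrow>
          phi N lam k l u = of_real (fact k * fact l / fact (k + l)
             * (nsq u / N) powi (- int k) * jacobiP k (l - k) 0 (1 + 2 * (nsq u / N)))
             * brk u lam ^ k * hbrk u lam ^ l" using jacobi_gt[OF assms] by blast
qed

end
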